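(* Let $p$ be a prime. Then $\mathcal{M}_p^{(1)}\subseteq p\cdot\mathcal{N}_p=\{pm : m\in\mathcal{N}_p\}$.
   Context: For positive integers $k,n$ let $S_k(n)=\sum_{i=1}^{n} i^k$. For an integer $a$, $\mathcal{M}_a$ denotes the set of positive integers $n$ such that $S_n(n)\equiv a\pmod{n}$. For a prime $p$, $\mathcal{M}_p^{(1)}=\{n\in\mathcal{M}_p : p\mid n,\ p^2\nmid n\}$. For a prime $p$, the set of primes $\mathcal{Q}_p$ is defined recursively (by induction on $q$, since prime divisors of $q-1$ are smaller than $q$): a prime $q$ belongs to $\mathcal{Q}_p$ if and only if (a) $q-1$ is square-free, (b) $p-1\nmid q-1$, and (c) every prime divisor $t$ of $q-1$ satisfies $t=p$ or $t\in\mathcal{Q}_p$. Further, $\mathcal{N}_p$ is the set of positive integers $n$ that are square-free, satisfy $p-1\nmid n$, and all of whose prime divisors lie in $\mathcal{Q}_p$. *)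

theory Defs
  imports "HOL-Computational_Algebra.Computational_Algebra" "HOL-Number_Theory.Number_Theory"
begin

definition S :: "nat \<Rightarrow> nat \<Rightarrow> nat" where
  "S k n = (\<Sum>i=1..n. i ^ k)"

definition M :: "int \<Rightarrow> nat set" where
  "M a = {n. n > 0 \<and> [int (S n n) = a] (mod int n)}"

definition M1 :: "nat \<Rightarrow> nat set" where
  "M1 p = {n \<in> M (int p). p dvd n \<and> \<not> p^2 dvd n}"

text \<open>Membership in Q_p, defined by strong recursion on q (prime divisors of q-1 are < q).\<close>
function inQ :: "nat \<Rightarrow> nat \<Rightarrow> bool" where
  "inQ p q = (prime q \<and> squarefree (q - 1) \<and> \<not> (p - 1) dvd (q - 1) \<and>
     (\<forall>t \<in> {t. t < q}. prime t \<and> t dvd (q - 1) \<longrightarrow> t = p \<or> inQ p t))"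
  by auto
termination
  by (relation "measure (\<lambda>(p, q). q)") auto

definition Q :: "nat \<Rightarrow> nat set" where
  "Q p = {q. inQ p q}"

definition N :: "nat \<Rightarrow> nat set" where
  "N p = {n. n > 0 \<and> squarefree n \<and> \<not> (p - 1) dvd n \<and> prime_factors n \<subseteq> Q p}"

end

theory Submission
  imports Defs
begin

lemma powsum_prime_dvd:
  fixes q k :: nat
  assumes q: "prime q" and k: "k > 0" and nd: "\<not> (q - 1) dvd k"
  shows "q dvd (\<Sum>i<q. i ^ k)"
proof (rule ccontr)
  assume ndT: "\<not> q dvd (\<Sum>i<q. i ^ k)"
  define T where "T = (\<Sum>i<q. i ^ k)"
  obtain g where g: "residue_primroot q g" using prime_primitive_root_exists[OF prime_gt_1_nat[OF q] q] by blast
  have cop: "coprime q g" and ordg: "ord q g = q - 1"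
    using g q by (auto simp: residue_primroot_def totient_prime)
  have q0: "q > 0" using q prime_gt_0_nat by blast
  have inj: "inj_on (\<lambda>i. g * i mod q) {..<q}"
  proof (rule inj_onI)
    fix i j assume i: "i \<in> {..<q}" and j: "j \<in> {..<q}" and e: "g * i mod q = g * j mod q"
    have "[g * i = g * j] (mod q)" using e by (simp add: cong_def)
    hence "[i = j] (mod q)" using cop by (metis cong_mult_lcancel_nat coprime_commute)
    thus "i = j" using i j by (simp add: cong_def)
  qed
  have img: "(\<lambda>i. g * i mod q) ` {..<q} = {..<q}"
    by (rule endo_inj_surj) (use inj q0 in auto)
  have bij: "bij_betw (\<lambda>i. g * i mod q) {..<q} {..<q}"
    using inj img by (simp add: bij_betw_def)
  have "(\<Sum>i<q. (g * i mod q) ^ k) = T"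
    unfolding T_def using sum.reindex_bij_betw[OF bij, of "\<lambda>i. i ^ k"] by simp
  moreover have "[(\<Sum>i<q. (g * i) ^ k) = (\<Sum>i<q. (g * i mod q) ^ k)] (mod q)"
    by (intro cong_sum cong_pow) (simp add: cong_def)
  moreover have "(\<Sum>i<q. (g * i) ^ k) = g ^ k * T"
    unfolding T_def by (simp add: power_mult_distrib sum_distrib_left)
  ultimately have "[g ^ k * T = 1 * T] (mod q)" by simp
  moreover have "coprime T q" using ndT q unfolding T_def
    by (metis coprime_commute prime_imp_coprime)
  ultimately have "[g ^ k = 1] (mod q)" using cong_mult_rcancel_nat by blast
  hence "ord q g dvd k" using ord_divides' by simp
  thus False using ordg nd by simp
qed

lemma powsum_prime_fermat:
  fixes q k :: nat
  assumes q: "prime q" and k: "k > 0" and d: "(q - 1) dvd k"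
  shows "[(\<Sum>i<q. i ^ k) = q - 1] (mod q)"
proof -
  have q1: "q \<ge> 1" using q prime_gt_0_nat by (simp add: Suc_leI)
  have "{..<q} = insert 0 {1..<q}" using q1 by auto
  hence "(\<Sum>i<q. i ^ k) = (\<Sum>i\<in>{1..<q}. i ^ k)" using k by simp
  moreover have "[(\<Sum>i\<in>{1..<q}. i ^ k) = (\<Sum>i\<in>{1..<q}. 1)] (mod q)"
  proof (rule cong_sum)
    fix i assume i: "i \<in> {1..<q}"
    hence "\<not> q dvd i" by (auto dest: dvd_imp_le)
    hence f: "[i ^ (q - 1) = 1] (mod q)" using fermat_theorem q by blast
    obtain r where r: "k = (q - 1) * r" using d by blast
    have "[(i ^ (q - 1)) ^ r = 1 ^ r] (mod q)" using f cong_pow by blast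
    thus "[i ^ k = 1] (mod q)" by (simp add: r power_mult)
  qed
  ultimately show ?thesis by simp
qed


lemma S_period:
  fixes q k n :: nat
  assumes q0: "q > 0" and k: "k > 0" and qn: "q dvd n"
  shows "[S k n = (n div q) * (\<Sum>i<q. i ^ k)] (mod q)"
proof -
  obtain r where r: "n = q * r" using qn by blast
  have "{..<Suc n} = insert 0 {1..n}" by auto
  hence "(\<Sum>i<Suc n. i ^ k) = (\<Sum>i\<in>{1..n}. i ^ k)" using k by simp
  hence e: "S k n = (\<Sum>i<n. i ^ k) + n ^ k" by (simp add: S_def)
  have "[n ^ k = 0] (mod q)" proof -
    have "n dvd n ^ k" using k by (simp add: dvd_power)
    hence "q dvd n ^ k" using qn dvd_trans by blast
    thus ?thesis by (simp add: cong_0_iff)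
  qed
  hence c1: "[S k n = (\<Sum>i<n. i ^ k) + 0] (mod q)" unfolding e by (intro cong_add) auto
  have "(\<Sum>i<n. i ^ k) = (\<Sum>j<r. \<Sum>i\<in>{j*q..<j*q+q}. i ^ k)"
    using sum.nat_group[of "\<lambda>i. i ^ k" q r] r by (simp add: mult.commute)
  also have "\<dots> = (\<Sum>j<r. \<Sum>i<q. (i + j*q) ^ k)"
    using sum.shift_bounds_nat_ivl[of "\<lambda>i. i ^ k" 0 "j*q" q for j]
    by (simp add: atLeast0LessThan add.commute)
  finally have e2: "(\<Sum>i<n. i ^ k) = (\<Sum>j<r. \<Sum>i<q. (i + j*q) ^ k)" .
  have "[(\<Sum>j<r. \<Sum>i<q. (i + j*q) ^ k) = (\<Sum>j<r. \<Sum>i<q. i ^ k)] (mod q)"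
    by (intro cong_sum cong_pow) (simp add: cong_def)
  hence "[(\<Sum>i<n. i ^ k) = r * (\<Sum>i<q. i ^ k)] (mod q)" using e2 by simp
  moreover have "n div q = r" using r q0 by simp
  ultimately show ?thesis using c1 by (metis add_0_right cong_trans)
qed

lemma S_mod_prime:
  fixes q k n :: nat
  assumes q: "prime q" and k: "k > 0" and qn: "q dvd n"
  shows "((q - 1) dvd k \<longrightarrow> [S k n = (n div q) * (q - 1)] (mod q)) \<and>
         (\<not> (q - 1) dvd k \<longrightarrow> q dvd S k n)"
proof -
  have q0: "q > 0" using q prime_gt_0_nat by blast
  note P = S_period[OF q0 k qn]
  show ?thesis
  proof (intro conjI impI)
    assume "(q - 1) dvd k"
    hence "[(\<Sum>i<q. i ^ k) = q - 1] (mod q)" using powsum_prime_fermat q k by blast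
    hence "[(n div q) * (\<Sum>i<q. i ^ k) = (n div q) * (q - 1)] (mod q)" by (rule cong_scalar_left)
    thus "[S k n = (n div q) * (q - 1)] (mod q)" using P cong_trans by blast
  next
    assume "\<not> (q - 1) dvd k"
    hence "q dvd (\<Sum>i<q. i ^ k)" using powsum_prime_dvd q k by blast
    hence "q dvd (n div q) * (\<Sum>i<q. i ^ k)" by simp
    thus "q dvd S k n" using P by (metis cong_dvd_iff)
  qed
qed

theorem mainTheorem4:
  fixes p :: nat
  assumes "prime p"
  shows "M1 p \<subseteq> {p * m | m. m \<in> N p}"
proof
  fix n assume "n \<in> M1 p"
  hence n0: "n > 0" and hS0: "[int (S n n) = int p] (mod int n)" and pn: "p dvd n"
    and pn2: "\<not> p ^ 2 dvd n"
    by (auto simp: M1_def M_def)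
  have hS: "[S n n = p] (mod n)" using hS0 by (simp add: cong_int_iff)
  have p: "prime p" by fact
  define m where "m = n div p"
  have nm: "n = p * m" using pn by (simp add: m_def)
  have m0: "m > 0" using n0 nm by auto
  have pm: "\<not> p dvd m"
  proof
    assume "p dvd m"
    hence "p ^ 2 dvd n" using nm by (auto simp: power2_eq_square)
    thus False using pn2 by blast
  qed
  have Sq: "[S n n = p] (mod q)" if "q dvd n" for q
    using cong_dvd_modulus_nat[OF hS that] .
  have np: "\<not> (p - 1) dvd n"
  proof
    assume d: "(p - 1) dvd n"
    have "[S n n = (n div p) * (p - 1)] (mod p)" using S_mod_prime[OF p n0 pn] d by blast
    hence "[(n div p) * (p - 1) = p] (mod p)" using Sq[OF pn] by (metis cong_sym cong_trans)
    hence "(n div p) * (p - 1) mod p = 0" by (simp only: cong_def mod_self)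
    hence "p dvd m * (p - 1)" unfolding m_def by (rule mod_0_imp_dvd)
    hence "p dvd m \<or> p dvd (p - 1)" using p prime_dvd_mult_iff by blast
    moreover have "\<not> p dvd (p - 1)"
    proof
      assume "p dvd p - 1"
      moreover have "p - 1 > 0" "p - 1 < p" using prime_gt_1_nat[OF p] by auto
      ultimately show False by (auto dest: dvd_imp_le)
    qed
    ultimately show False using pm by blast
  qed
  have qprops: "(q - 1) dvd n \<and> \<not> q dvd (n div q)" if q: "prime q" and qm: "q dvd m" for q
  proof -
    have qn: "q dvd n" using qm nm by simp
    have qp: "q \<noteq> p" using qm pm by blast
    have nqp: "\<not> q dvd p" using qp p q primes_dvd_imp_eq by blast
    note SM = S_mod_prime[OF q n0 qn]
    have d: "(q - 1) dvd n"
    proof (rule ccontr)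
      assume "\<not> (q - 1) dvd n"
      hence "q dvd S n n" using SM by blast
      thus False using Sq[OF qn] nqp by (metis cong_dvd_iff)
    qed
    have "[S n n = (n div q) * (q - 1)] (mod q)" using SM d by blast
    moreover have "\<not> q dvd (n div q)"
    proof
      assume "q dvd n div q"
      hence "q dvd (n div q) * (q - 1)" by simp
      hence "q dvd S n n" using \<open>[S n n = (n div q) * (q - 1)] (mod q)\<close> by (metis cong_dvd_iff)
      thus False using Sq[OF qn] nqp by (metis cong_dvd_iff)
    qed
    ultimately show ?thesis using d by blast
  qed
  have sqm: "squarefree m"
  proof -
    have "\<forall>q. prime q \<longrightarrow> \<not> q ^ 2 dvd m"
    proof (intro allI impI notI)
      fix q :: nat assume q: "prime q" and d: "q ^ 2 dvd m"
      obtain t where t: "m = q ^ 2 * t" using d by blast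
      have qm: "q dvd m" using t by (simp add: power2_eq_square)
      have "n div q = q * (p * t)" using t nm q prime_gt_0_nat
        by (simp add: power2_eq_square)
      hence "q dvd n div q" by simp
      thus False using qprops[OF q qm] by blast
    qed
    thus ?thesis using m0 squarefree_factorial_semiring by blast
  qed
  have sqn: "squarefree n"
  proof -
    have "coprime p m" using pm p prime_imp_coprime by blast
    moreover have "squarefree p" using p squarefree_prime by blast
    ultimately show ?thesis using nm sqm squarefree_mult_coprime by metis
  qed
  have npm: "\<not> (p - 1) dvd m" using np nm by auto
  have inq: "prime q \<longrightarrow> q dvd m \<longrightarrow> inQ p q" for q
  proof (induction q rule: less_induct)
    case (less q)
    show ?case
    proof (intro impI)
      assume q: "prime q" and qm: "q dvd m"
      have d: "(q - 1) dvd n" using qprops[OF q qm] by blast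
      have s1: "squarefree (q - 1)" using squarefree_mono[OF d sqn] .
      have s2: "\<not> (p - 1) dvd (q - 1)" using d np dvd_trans by blast
      have s3: "\<forall>t \<in> {t. t < q}. prime t \<and> t dvd (q - 1) \<longrightarrow> t = p \<or> inQ p t"
      proof (intro ballI impI)
        fix t assume tq: "t \<in> {t. t < q}" and tt: "prime t \<and> t dvd (q - 1)"
        hence "t dvd p * m" using d nm dvd_trans by metis
        hence "t dvd p \<or> t dvd m" using tt prime_dvd_mult_iff by blast
        thus "t = p \<or> inQ p t"
        proof
          assume "t dvd p" thus ?thesis using tt p primes_dvd_imp_eq by blast
        next
          assume "t dvd m" thus ?thesis using less.IH[of t] tq tt by blast
        qed
      qed
      show "inQ p q" using q s1 s2 s3 by (subst inQ.simps) blast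
    qed
  qed
  have "prime_factors m \<subseteq> Q p"
  proof
    fix q assume "q \<in> prime_factors m"
    hence "prime q" "q dvd m" by (auto simp: in_prime_factors_iff)
    thus "q \<in> Q p" using inq[of q] unfolding Q_def by blast
  qed
  hence "m \<in> N p"
    unfolding N_def using m0 sqm npm by blast
  thus "n \<in> {p * m | m. m \<in> N p}" using nm by blast
qed

end
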